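(* Suppose the initial condition is independent of the graph, i.e. $\mathbb P=\mathbb P_0\otimes\mathbb P_g$, and that $\liminf_n p_n^3n^{1-\varepsilon}=\infty$ for some $\varepsilon\in(0,1)$. Then for every $r>1$, $$\lim_{n\to\infty}\mathbb E_0\big[\|\hat\eta^n_0\|_{-r}^2\big]=0,\quad\mathbb P_g\text{-a.s.}$$ In particular the moment bound $\sup_n\mathbb E_0\|\hat\eta^n_0\|_{-r}^{1+\alpha}<\infty$ holds $\mathbb P_g$-a.s. for every $\alpha\in(0,1)$ and the limit of $\hat\eta^n_0$ is $0$.
   Context: $\mathbb T=\mathbb R/2\pi\mathbb Z$. For each $n\ge2$, $p_n\in(0,1]$ and $(\xi^{(n)}_{ij})_{i,j\le n}$ are i.i.d. Bernoulli$(p_n)$ (law $\mathbb P_g$); $(\theta^{i,n}_0)_{i\le n}$ are $\mathbb T$-valued random variables with law $\mathbb P_0$ (expectation $\mathbb E_0$), arbitrary otherwise. $\hat\xi^{(n)}_{ij}=\xi^{(n)}_{ij}/p_n-1$ and $\hat\eta^n_0=n^{-3/2}\sum_{i,j=1}^n\hat\xi^{(n)}_{ij}\delta_{(\theta^{i,n}_0,\theta^{j,n}_0)}$, viewed in $H^{-r}(\mathbb T^2)$, the dual of the $L^2$-Sobolev space $H^r(\mathbb T^2)$, with norm $\|\cdot\|_{-r}$. *)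

theory Defs
  imports "HOL-Probability.Probability"
begin

text \<open>Fourier coefficients (at frequency k in Z^2) of the finite signed atomic measure
  sum over a in A of w a times the Dirac mass at x a, on the torus T^2 = (R/2 pi Z)^2.
  Points of T are represented by real representatives; the exponentials are
  2 pi-periodic, so the value does not depend on the choice of representatives.\<close>
definition fourier_atoms ::
  "'a set \<Rightarrow> ('a \<Rightarrow> real) \<Rightarrow> ('a \<Rightarrow> real \<times> real) \<Rightarrow> int \<times> int \<Rightarrow> complex" where
  "fourier_atoms A w x k =
     (\<Sum>a\<in>A. complex_of_real (w a) *
        exp (- \<i> * complex_of_real (real_of_int (fst k) * fst (x a) + real_of_int (snd k) * snd (x a))))
     / complex_of_real (2 * pi)"

definition Hneg_norm_sq ::
  "real \<Rightarrow> 'a set \<Rightarrow> ('a \<Rightarrow> real) \<Rightarrow> ('a \<Rightarrow> real \<times> real) \<Rightarrow> real" where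
  "Hneg_norm_sq r A w x =
     (\<Sum>\<^sub>\<infinity>k\<in>(UNIV :: (int \<times> int) set).
        (1 + real_of_int (fst k)^2 + real_of_int (snd k)^2) powr (-r) * (cmod (fourier_atoms A w x k))^2)"

definition xihat :: "real \<Rightarrow> bool \<Rightarrow> real" where
  "xihat p b = (if b then 1 else 0) / p - 1"

text \<open>Squared H^{-r} norm of eta-hat^n_0 = n^{-3/2} sum_{i,j} xihat_ij delta_(theta_i, theta_j),
  indices i, j ranging over {0..<n}.\<close>
definition eta_norm_sq ::
  "real \<Rightarrow> nat \<Rightarrow> real \<Rightarrow> (nat \<Rightarrow> nat \<Rightarrow> bool) \<Rightarrow> (nat \<Rightarrow> real) \<Rightarrow> real" where
  "eta_norm_sq r n p g th =
     Hneg_norm_sq r ({..<n} \<times> {..<n})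
       (\<lambda>(i, j). real n powr (-3/2) * xihat p (g i j))
       (\<lambda>(i, j). (th i, th j))"

end

theory Submission
  imports Defs "HOL-Real_Asymp.Real_Asymp"
begin

lemma sq_powr_half:
  assumes "(x::real) > 0"
  shows "(x^2) powr (c/2) = x powr c"
proof -
  have "x^2 = x powr 2" using assms by (simp add: powr_realpow)
  then have "(x^2) powr (c/2) = (x powr 2) powr (c/2)" by (rule arg_cong)
  also have "\<dots> = x powr c" by (simp only: powr_powr) simp
  finally show ?thesis .
qed

lemma nat_weight_summable:
  assumes r: "r > 1"
  shows "(\<lambda>j::nat. (1 + real j ^ 2) powr (-r/2)) summable_on UNIV"
proof -
  have s: "summable (\<lambda>j::nat. real j powr (-r))"
    using r by (subst summable_real_powr_iff) auto
  have "summable (\<lambda>j::nat. (1 + real j ^ 2) powr (-r/2))"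
  proof (rule summable_comparison_test_ev[OF _ s])
    show "\<forall>\<^sub>F j in sequentially. norm ((1 + real j ^ 2) powr (-r/2)) \<le> real j powr (-r)"
      using eventually_ge_at_top[of "1::nat"]
    proof eventually_elim
      case (elim j)
      have "(1 + real j ^ 2) powr (-r/2) \<le> (real j ^ 2) powr (-r/2)"
        using elim r by (intro powr_mono2') auto
      also have "(real j ^ 2) powr (-r/2) = real j powr (-r)"
        using elim sq_powr_half[of "real j" "-r"] by simp
      finally show ?case by simp
    qed
  qed
  then show ?thesis by (subst summable_on_UNIV_nonneg_real_iff) auto
qed

lemma int_weight_summable:
  assumes r: "r > 1"
  shows "(\<lambda>a::int. (1 + real_of_int a ^ 2) powr (-r/2)) summable_on UNIV"
proof -
  let ?u = "\<lambda>a::int. (1 + real_of_int a ^ 2) powr (-r/2)"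
  have 1: "?u summable_on range int"
    using nat_weight_summable[OF r] by (subst summable_on_reindex) (auto simp: o_def)
  have 2: "?u summable_on range (\<lambda>j. - int j)"
    using nat_weight_summable[OF r] by (subst summable_on_reindex) (auto simp: o_def inj_on_def)
  have "UNIV = range int \<union> range (\<lambda>j. - int j)"
  proof (intro set_eqI iffI)
    fix a :: int
    show "a \<in> range int \<union> range (\<lambda>j. - int j)"
    proof (cases "a \<ge> 0")
      case True then have "a = int (nat a)" by simp
      then show ?thesis by blast
    next
      case False then have "a = - int (nat (-a))" by simp
      then show ?thesis by blast
    qed
  qed auto
  with summable_on_union[OF 1 2] show ?thesis by simp
qed

lemma weight_summable:
  assumes r: "r > 1"
  shows "(\<lambda>k::int\<times>int. (1 + real_of_int (fst k)^2 + real_of_int (snd k)^2) powr (-r)) summable_on UNIV"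
proof (rule nonneg_bdd_above_summable_on)
  let ?u = "\<lambda>a::int. (1 + real_of_int a ^ 2) powr (-r/2)"
  let ?U = "infsum ?u UNIV"
  have uS: "?u summable_on UNIV" by (rule int_weight_summable[OF r])
  have uF: "sum ?u F \<le> ?U" if "finite F" for F
    by (rule finite_sum_le_infsum[OF uS that]) auto
  have w: "(1 + real_of_int a^2 + real_of_int b^2) powr (-r) \<le> ?u a * ?u b" for a b
  proof -
    have A: "real_of_int a^2 \<ge> 0" "real_of_int b^2 \<ge> 0" by auto
    have key: "\<And>A B::real. A \<ge> 0 \<Longrightarrow> B \<ge> 0 \<Longrightarrow> (1 + A + B) powr (-r) \<le> (1 + A) powr (-r/2) * (1 + B) powr (-r/2)"
    proof -
      fix A B :: real assume AB: "A \<ge> 0" "B \<ge> 0"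
      then have p: "0 < (1 + A) * (1 + B)" by simp
      have q: "0 < 1 + A + B" using AB by simp
      have "(1 + A) * (1 + B) \<le> (1 + A + B)^2" using AB
        by (auto simp: power2_eq_square algebra_simps)
      then have "((1 + A + B)^2) powr (-r/2) \<le> ((1 + A) * (1 + B)) powr (-r/2)"
        using r p by (intro powr_mono2') auto
      moreover have "((1 + A + B)^2) powr (-r/2) = (1 + A + B) powr (-r)"
        using sq_powr_half[OF q, of "-r"] by simp
      moreover have "((1 + A) * (1 + B)) powr (-r/2) = (1 + A) powr (-r/2) * (1 + B) powr (-r/2)"
        using AB by (simp add: powr_mult)
      ultimately show "(1 + A + B) powr (-r) \<le> (1 + A) powr (-r/2) * (1 + B) powr (-r/2)" by simp
    qed
    show ?thesis using key[OF A] by simp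
  qed
  show "bdd_above (sum (\<lambda>k::int\<times>int. (1 + real_of_int (fst k)^2 + real_of_int (snd k)^2) powr (-r)) ` {F. F \<subseteq> UNIV \<and> finite F})"
  proof (rule bdd_aboveI2)
    fix F :: "(int\<times>int) set" assume "F \<in> {F. F \<subseteq> UNIV \<and> finite F}"
    then have fin: "finite F" by auto
    have "sum (\<lambda>k. (1 + real_of_int (fst k)^2 + real_of_int (snd k)^2) powr (-r)) F
          \<le> sum (\<lambda>k. ?u (fst k) * ?u (snd k)) F"
      by (intro sum_mono w)
    also have "\<dots> \<le> sum (\<lambda>k. ?u (fst k) * ?u (snd k)) (fst ` F \<times> snd ` F)"
    proof (rule sum_mono2)
      show "finite (fst ` F \<times> snd ` F)" using fin by simp
      show "F \<subseteq> fst ` F \<times> snd ` F"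
      proof
        fix k assume "k \<in> F"
        then have "fst k \<in> fst ` F" "snd k \<in> snd ` F" by blast+
        then show "k \<in> fst ` F \<times> snd ` F" by (simp add: mem_Times_iff)
      qed
      show "0 \<le> ?u (fst b) * ?u (snd b)" for b by simp
    qed
    also have "\<dots> = sum ?u (fst ` F) * sum ?u (snd ` F)"
      by (simp add: sum_product sum.cartesian_product case_prod_beta)
    also have "\<dots> \<le> ?U * ?U"
    proof (rule mult_mono)
      show "sum ?u (fst ` F) \<le> ?U" "sum ?u (snd ` F) \<le> ?U" using fin uF by simp_all
      show "0 \<le> ?U" using uF[of "{}"] by simp
      show "0 \<le> sum ?u (snd ` F)" by (rule sum_nonneg) simp
    qed
    finally show "sum (\<lambda>k. (1 + real_of_int (fst k)^2 + real_of_int (snd k)^2) powr (-r)) F \<le> ?U * ?U" .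
  qed
qed simp

definition wt :: "real \<Rightarrow> int \<times> int \<Rightarrow> real" where
  "wt r k = (1 + real_of_int (fst k)^2 + real_of_int (snd k)^2) powr (-r)"

lemma wt_nonneg: "wt r k \<ge> 0" by (simp add: wt_def)

lemma wt_summable: "r > 1 \<Longrightarrow> wt r summable_on UNIV"
  unfolding wt_def using weight_summable by simp

definition phase :: "('a \<Rightarrow> real \<times> real) \<Rightarrow> int \<times> int \<Rightarrow> 'a \<Rightarrow> real" where
  "phase x k a = real_of_int (fst k) * fst (x a) + real_of_int (snd k) * snd (x a)"

lemma cos_mm: "cos (- a - b) = cos (a + b)"
  by (metis cos_minus minus_add_distrib diff_conv_add_uminus)
lemma sin_mm: "sin (- a - b) = - sin (a + b)"
  by (metis sin_minus minus_add_distrib diff_conv_add_uminus)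

lemma fourier_Re:
  "Re (fourier_atoms A w x k) = (\<Sum>a\<in>A. w a * cos (phase x k a)) / (2 * pi)"
  unfolding fourier_atoms_def phase_def
  by (simp add: Re_divide_of_real Re_sum Re_exp Im_exp cos_mm)

lemma fourier_Im:
  "Im (fourier_atoms A w x k) = - (\<Sum>a\<in>A. w a * sin (phase x k a)) / (2 * pi)"
  unfolding fourier_atoms_def phase_def
  by (simp add: Im_divide_of_real Im_sum Re_exp Im_exp sum_negf sin_mm)

lemma fourier_norm_bound:
  assumes "\<And>a. a \<in> A \<Longrightarrow> \<bar>w a\<bar> \<le> c"
  shows "cmod (fourier_atoms A w x k) \<le> real (card A) * c / (2 * pi)"
proof -
  have "cmod (\<Sum>a\<in>A. complex_of_real (w a) *
        exp (- \<i> * complex_of_real (real_of_int (fst k) * fst (x a) + real_of_int (snd k) * snd (x a))))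
      \<le> (\<Sum>a\<in>A. cmod (complex_of_real (w a) *
        exp (- \<i> * complex_of_real (real_of_int (fst k) * fst (x a) + real_of_int (snd k) * snd (x a)))))"
    by (rule norm_sum)
  also have "\<dots> = (\<Sum>a\<in>A. \<bar>w a\<bar>)"
    by (simp add: norm_mult norm_exp_eq_Re)
  also have "\<dots> \<le> (\<Sum>a\<in>A. c)" using assms by (intro sum_mono) auto
  also have "\<dots> = real (card A) * c" by simp
  finally show ?thesis unfolding fourier_atoms_def
    by (simp add: norm_divide divide_right_mono)
qed

lemma sq_le_of_abs:
  assumes "0 \<le> K" "K \<le> \<bar>x\<bar>" shows "K^2 \<le> (x::real)^2"
proof -
  have "K^2 \<le> \<bar>x\<bar>^2" using assms by (intro power_mono) auto
  then show ?thesis by simp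
qed

lemma H_bound:
  fixes A :: "'a set" and w :: "'a \<Rightarrow> real" and x :: "'a \<Rightarrow> real \<times> real"
  assumes r: "r > 1" and K: "K > 0" and \<delta>: "\<delta> \<ge> 0" and Mb: "Mb \<ge> 0"
    and Fb: "\<And>k. cmod (fourier_atoms A w x k) \<le> Mb"
  defines "bad \<equiv> (\<exists>k. \<bar>fst k\<bar> \<le> K \<and> \<bar>snd k\<bar> \<le> K \<and>
              (\<delta> \<le> \<bar>Re (fourier_atoms A w x k)\<bar> \<or> \<delta> \<le> \<bar>Im (fourier_atoms A w x k)\<bar>))"
  shows "Hneg_norm_sq r A w x \<le> (2 * \<delta>^2 + (if bad then Mb^2 else 0)) * infsum (wt r) UNIV
            + K powr (1 - r) * Mb^2 * infsum (wt ((r+1)/2)) UNIV"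
proof -
  define s where "s = (r+1)/2"
  have s: "s > 1" using r by (simp add: s_def)
  define F where "F k = fourier_atoms A w x k" for k
  define c where "c = 2 * \<delta>^2 + (if bad then Mb^2 else 0)"
  have c0: "c \<ge> 0" by (simp add: c_def)
  let ?f = "\<lambda>k. wt r k * (cmod (F k))^2"
  let ?g = "\<lambda>k. wt r k * c + (K powr (1 - r) * Mb^2) * wt s k"
  have H: "Hneg_norm_sq r A w x = infsum ?f UNIV"
    by (simp add: Hneg_norm_sq_def wt_def F_def)
  have gS: "?g summable_on UNIV"
    by (intro summable_on_add summable_on_cmult_left summable_on_cmult_right wt_summable r s)
  have pt: "?f k \<le> ?g k" for k
  proof (cases "\<bar>fst k\<bar> \<le> K \<and> \<bar>snd k\<bar> \<le> K")
    case True
    have "(cmod (F k))^2 \<le> c"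
    proof (cases bad)
      case True
      have "(cmod (F k))^2 \<le> Mb^2" using Fb[of k] by (simp add: F_def power_mono)
      moreover have "Mb^2 \<le> 2 * \<delta>^2 + Mb^2" by simp
      ultimately have "(cmod (F k))^2 \<le> 2 * \<delta>^2 + Mb^2" by (rule order_trans)
      then show ?thesis using True unfolding c_def by simp
    next
      case False
      then have "\<bar>Re (F k)\<bar> < \<delta>" "\<bar>Im (F k)\<bar> < \<delta>"
        using \<open>\<bar>fst k\<bar> \<le> K \<and> \<bar>snd k\<bar> \<le> K\<close> unfolding bad_def F_def by force+
      then have "\<bar>Re (F k)\<bar>^2 \<le> \<delta>^2" "\<bar>Im (F k)\<bar>^2 \<le> \<delta>^2"
        by (intro power_mono; simp)+
      then have "(Re (F k))^2 \<le> \<delta>^2" "(Im (F k))^2 \<le> \<delta>^2" by simp_all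
      then show ?thesis using False by (simp add: c_def cmod_power2)
    qed
    then have "?f k \<le> wt r k * c" by (intro mult_left_mono wt_nonneg)
    moreover have "0 \<le> (K powr (1 - r) * Mb^2) * wt s k" by (simp add: wt_nonneg)
    ultimately show ?thesis by linarith
  next
    case False
    define q where "q = 1 + real_of_int (fst k)^2 + real_of_int (snd k)^2"
    have q1: "q \<ge> 1" by (simp add: q_def)
    have "K^2 \<le> q"
    proof -
      have "K \<le> \<bar>real_of_int (fst k)\<bar> \<or> K \<le> \<bar>real_of_int (snd k)\<bar>" using False by auto
      then have "K^2 \<le> real_of_int (fst k)^2 \<or> K^2 \<le> real_of_int (snd k)^2"
        using K sq_le_of_abs[of K] by auto
      then show ?thesis unfolding q_def
        using zero_le_power2[of "real_of_int (fst k)"] zero_le_power2[of "real_of_int (snd k)"] by linarith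
    qed
    have wrs: "wt r k = wt s k * q powr (-((r - 1)/2))"
    proof -
      have a: "wt r k = q powr (-r)" "wt s k = q powr (-s)" by (simp_all add: wt_def q_def)
      have b: "-r = -s + -((r - 1)/2)" by (simp add: s_def field_simps)
      show ?thesis unfolding a by (subst b, subst powr_add) simp
    qed
    have "q powr (-((r - 1)/2)) \<le> (K^2) powr (-((r - 1)/2))"
      using \<open>K^2 \<le> q\<close> K r by (intro powr_mono2') auto
    also have "(K^2) powr (-((r - 1)/2)) = K powr (1 - r)"
    proof -
      have e: "-((r - 1)/2) = (1 - r)/2" by (simp add: field_simps)
      show ?thesis using sq_powr_half[OF K, of "1 - r"] by (simp only: e)
    qed
    finally have qK: "q powr (-((r - 1)/2)) \<le> K powr (1 - r)" .
    have "?f k \<le> wt r k * Mb^2"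
      using Fb[of k] Mb by (intro mult_left_mono wt_nonneg) (simp add: F_def power_mono)
    also have "\<dots> = wt s k * q powr (-((r - 1)/2)) * Mb^2" by (simp add: wrs)
    also have "\<dots> \<le> wt s k * K powr (1 - r) * Mb^2"
      using qK by (intro mult_right_mono mult_left_mono wt_nonneg) auto
    also have "\<dots> \<le> ?g k"
    proof -
      have "0 \<le> wt r k * c" using c0 wt_nonneg by simp
      moreover have "wt s k * K powr (1 - r) * Mb^2 = (K powr (1 - r) * Mb^2) * wt s k" by (simp add: mult_ac)
      ultimately show ?thesis by linarith
    qed
    finally show ?thesis .
  qed
  have fS: "?f summable_on UNIV"
  proof (rule summable_on_comparison_test)
    show "(\<lambda>k. wt r k * Mb^2) summable_on UNIV" by (intro summable_on_cmult_left wt_summable r)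
    show "?f k \<le> wt r k * Mb^2" for k
      using Fb[of k] Mb by (intro mult_left_mono wt_nonneg) (simp add: F_def power_mono)
    show "0 \<le> ?f k" for k by (simp add: wt_nonneg)
  qed
  have "infsum ?f UNIV \<le> infsum ?g UNIV"
    by (rule infsum_mono[OF fS gS pt])
  also have "infsum ?g UNIV = infsum (\<lambda>k. wt r k * c) UNIV + infsum (\<lambda>k. (K powr (1 - r) * Mb^2) * wt s k) UNIV"
    by (rule infsum_add) (intro summable_on_cmult_left summable_on_cmult_right wt_summable r s)+
  also have "infsum (\<lambda>k. wt r k * c) UNIV = infsum (wt r) UNIV * c"
    by (rule infsum_cmult_left) (rule wt_summable[OF r])
  also have "infsum (\<lambda>k. (K powr (1 - r) * Mb^2) * wt s k) UNIV = (K powr (1 - r) * Mb^2) * infsum (wt s) UNIV"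
    by (rule infsum_cmult_right) (rule wt_summable[OF s])
  finally have "infsum ?f UNIV \<le> infsum (wt r) UNIV * c + (K powr (1 - r) * Mb^2) * infsum (wt s) UNIV" .
  then show ?thesis using H unfolding c_def s_def by (simp add: mult.commute)
qed

lemma xihat_bound: "0 < p \<Longrightarrow> p \<le> 1 \<Longrightarrow> \<bar>xihat p b\<bar> \<le> 1 / p"
  by (auto simp: xihat_def field_simps)

locale setting =
  fixes M0 :: "'a measure" and Mg :: "'b measure" and n :: nat and p :: real
    and \<xi> :: "nat \<Rightarrow> nat \<Rightarrow> 'b \<Rightarrow> bool" and \<theta> :: "nat \<Rightarrow> 'a \<Rightarrow> real"
  assumes M0: "prob_space M0" and Mg: "prob_space Mg" and n: "n \<ge> 2" and p: "0 < p" "p \<le> 1"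
    and xi_meas: "\<forall>i<n. \<forall>j<n. \<xi> i j \<in> measurable Mg (count_space UNIV)"
    and xi_bern: "\<forall>i<n. \<forall>j<n. measure Mg {\<omega> \<in> space Mg. \<xi> i j \<omega>} = p"
    and xi_indep: "prob_space.indep_vars Mg (\<lambda>_. count_space UNIV) (\<lambda>(i, j). \<xi> i j) ({..<n} \<times> {..<n})"
    and theta_meas: "\<forall>i. \<theta> i \<in> borel_measurable M0"
begin

definition "I = {..<n} \<times> {..<n}"
definition "wv \<omega> = (\<lambda>(i, j). real n powr (-3/2) * xihat p (\<xi> i j \<omega>))"
definition "xv x = (\<lambda>(i, j). (\<theta> i x, \<theta> j x))"
definition "F \<omega> x k = fourier_atoms I (wv \<omega>) (xv x) k"
definition "Box K = {k::int\<times>int. \<bar>real_of_int (fst k)\<bar> \<le> (K::real) \<and> \<bar>real_of_int (snd k)\<bar> \<le> K}"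
definition "badp \<delta> K \<omega> x = (\<exists>k\<in>Box K. \<delta> \<le> \<bar>Re (F \<omega> x k)\<bar> \<or> \<delta> \<le> \<bar>Im (F \<omega> x k)\<bar>)"
definition "BAD \<delta> K = {z \<in> space (Mg \<Otimes>\<^sub>M M0). badp \<delta> K (fst z) (snd z)}"

lemma finI: "finite I" by (simp add: I_def)
lemma cardI: "card I = n^2" by (simp add: I_def power2_eq_square)

lemma Box_sub: "Box K \<subseteq> {-\<lceil>K\<rceil>..\<lceil>K\<rceil>} \<times> {-\<lceil>K\<rceil>..\<lceil>K\<rceil>}"
proof
  fix k assume "k \<in> Box K"
  then have a: "\<bar>real_of_int (fst k)\<bar> \<le> K" "\<bar>real_of_int (snd k)\<bar> \<le> K" by (auto simp: Box_def)
  have c: "\<bar>a\<bar> \<le> \<lceil>K\<rceil>" if "\<bar>real_of_int a\<bar> \<le> K" for a :: int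
    by (metis ceiling_mono ceiling_of_int of_int_abs that)
  from c[OF a(1)] c[OF a(2)] show "k \<in> {-\<lceil>K\<rceil>..\<lceil>K\<rceil>} \<times> {-\<lceil>K\<rceil>..\<lceil>K\<rceil>}"
    by (cases k) (auto simp: abs_le_iff)
qed

lemma finBox: "finite (Box K)"
  by (rule finite_subset[OF Box_sub]) auto

lemma xihat_meas: "i < n \<Longrightarrow> j < n \<Longrightarrow> (\<lambda>\<omega>. xihat p (\<xi> i j \<omega>)) \<in> borel_measurable Mg"
  using xi_meas by (intro measurable_compose[of "\<xi> i j" Mg "count_space UNIV" "xihat p"]) auto

lemma ReF: "Re (F \<omega> x k) = (\<Sum>a\<in>I. wv \<omega> a * cos (phase (xv x) k a)) / (2 * pi)"
  unfolding F_def by (rule fourier_Re)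
lemma ImF: "Im (F \<omega> x k) = - (\<Sum>a\<in>I. wv \<omega> a * sin (phase (xv x) k a)) / (2 * pi)"
  unfolding F_def by (rule fourier_Im)

lemma wv_meas: "a \<in> I \<Longrightarrow> (\<lambda>z. wv (fst z) a) \<in> borel_measurable (Mg \<Otimes>\<^sub>M M0)"
proof -
  assume "a \<in> I"
  then obtain i j where a: "a = (i, j)" "i < n" "j < n" by (auto simp: I_def)
  have "(\<lambda>\<omega>. xihat p (\<xi> i j \<omega>)) \<in> borel_measurable Mg" using a xihat_meas by auto
  then have "(\<lambda>z. xihat p (\<xi> i j (fst z))) \<in> borel_measurable (Mg \<Otimes>\<^sub>M M0)"
    by (rule measurable_compose[OF measurable_fst])
  then show ?thesis unfolding a wv_def by simp
qed

lemma phase_meas: "a \<in> I \<Longrightarrow> (\<lambda>z. phase (xv (snd z)) k a) \<in> borel_measurable (Mg \<Otimes>\<^sub>M M0)"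
proof -
  assume "a \<in> I"
  then obtain i j where a: "a = (i, j)" by (auto simp: I_def)
  have t: "(\<lambda>z. \<theta> l (snd z)) \<in> borel_measurable (Mg \<Otimes>\<^sub>M M0)" for l
    using theta_meas by (intro measurable_compose[OF measurable_snd]) auto
  show ?thesis unfolding a phase_def xv_def using t[of i] t[of j] by simp
qed

lemma ReF_meas: "(\<lambda>z. Re (F (fst z) (snd z) k)) \<in> borel_measurable (Mg \<Otimes>\<^sub>M M0)"
  unfolding ReF using wv_meas phase_meas by (intro borel_measurable_divide borel_measurable_sum borel_measurable_times borel_measurable_cos) auto

lemma ImF_meas: "(\<lambda>z. Im (F (fst z) (snd z) k)) \<in> borel_measurable (Mg \<Otimes>\<^sub>M M0)"
  unfolding ImF using wv_meas phase_meas by (intro borel_measurable_divide borel_measurable_uminus borel_measurable_sum borel_measurable_times borel_measurable_sin) auto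

lemma BAD_sets: "BAD \<delta> K \<in> sets (Mg \<Otimes>\<^sub>M M0)"
proof -
  have "BAD \<delta> K = space (Mg \<Otimes>\<^sub>M M0) \<inter> (\<Union>k\<in>Box K.
          {z \<in> space (Mg \<Otimes>\<^sub>M M0). \<delta> \<le> \<bar>Re (F (fst z) (snd z) k)\<bar>} \<union>
          {z \<in> space (Mg \<Otimes>\<^sub>M M0). \<delta> \<le> \<bar>Im (F (fst z) (snd z) k)\<bar>})"
    by (auto simp: BAD_def badp_def)
  also have "\<dots> \<in> sets (Mg \<Otimes>\<^sub>M M0)"
  proof (intro sets.Int sets.top sets.finite_UN sets.Un finBox)
    fix k
    have a: "(\<lambda>z. \<bar>Re (F (fst z) (snd z) k)\<bar>) \<in> borel_measurable (Mg \<Otimes>\<^sub>M M0)"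
      "(\<lambda>z. \<bar>Im (F (fst z) (snd z) k)\<bar>) \<in> borel_measurable (Mg \<Otimes>\<^sub>M M0)"
      using ReF_meas ImF_meas by (intro borel_measurable_abs; blast)+
    show "{z \<in> space (Mg \<Otimes>\<^sub>M M0). \<delta> \<le> \<bar>Re (F (fst z) (snd z) k)\<bar>} \<in> sets (Mg \<Otimes>\<^sub>M M0)"
      using a(1) by measurable
    show "{z \<in> space (Mg \<Otimes>\<^sub>M M0). \<delta> \<le> \<bar>Im (F (fst z) (snd z) k)\<bar>} \<in> sets (Mg \<Otimes>\<^sub>M M0)"
      using a(2) by measurable
  qed
  finally show ?thesis .
qed

lemma xi_sets: "i < n \<Longrightarrow> j < n \<Longrightarrow> {\<omega> \<in> space Mg. \<xi> i j \<omega>} \<in> sets Mg"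
proof -
  assume ij: "i < n" "j < n"
  have "\<xi> i j \<in> measurable Mg (count_space UNIV)" using xi_meas ij by auto
  then have "\<xi> i j -` {True} \<inter> space Mg \<in> sets Mg" by (rule measurable_sets) simp
  moreover have "\<xi> i j -` {True} \<inter> space Mg = {\<omega> \<in> space Mg. \<xi> i j \<omega>}" by auto
  ultimately show ?thesis by simp
qed

lemma xihat_mean: "i < n \<Longrightarrow> j < n \<Longrightarrow> integral\<^sup>L Mg (\<lambda>\<omega>. xihat p (\<xi> i j \<omega>)) = 0"
proof -
  assume ij: "i < n" "j < n"
  interpret prob_space Mg by (rule Mg)
  let ?S = "{\<omega> \<in> space Mg. \<xi> i j \<omega>}"
  have S: "?S \<in> sets Mg" by (rule xi_sets[OF ij])
  have "integral\<^sup>L Mg (\<lambda>\<omega>. xihat p (\<xi> i j \<omega>)) = integral\<^sup>L Mg (\<lambda>\<omega>. indicator ?S \<omega> / p - 1)"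
    by (rule Bochner_Integration.integral_cong) (auto simp: xihat_def indicator_def)
  also have "\<dots> = integral\<^sup>L Mg (\<lambda>\<omega>. indicator ?S \<omega> / p) - integral\<^sup>L Mg (\<lambda>\<omega>. 1)"
    using S by (intro Bochner_Integration.integral_diff integrable_divide_zero integrable_real_indicator) (auto simp: less_top[symmetric])
  also have "\<dots> = measure Mg ?S / p - 1"
    using S by (simp add: prob_space)
  also have "\<dots> = 0" using xi_bern ij p by simp
  finally show ?thesis .
qed

lemma hoeffding_step:
  assumes cf: "\<And>a. \<bar>cf a\<bar> \<le> 1" and \<delta>: "\<delta> \<ge> 0"
  shows "measure Mg {\<omega> \<in> space Mg. \<delta> \<le> \<bar>\<Sum>a\<in>I. cf a * wv \<omega> a / (2 * pi)\<bar>}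
          \<le> 2 * exp (- (\<delta>^2 * real n * p^2))"
proof -
  interpret prob_space Mg by (rule Mg)
  define C where "C = real n powr (-3/2) / (2 * pi * p)"
  define Y where "Y a \<omega> = cf a * wv \<omega> a / (2 * pi)" for a \<omega>
  define Yc where "Yc a b = cf a * (real n powr (-3/2) * xihat p b) / (2 * pi)" for a :: "nat \<times> nat" and b
  have C0: "C > 0" using p n by (simp add: C_def)
  have indep0: "indep_vars (\<lambda>_. borel) (\<lambda>a \<omega>. Yc a ((\<lambda>(i, j). \<xi> i j) a \<omega>)) I"
    unfolding I_def by (rule indep_vars_compose2[OF xi_indep]) simp
  have indep: "indep_vars (\<lambda>_. borel) Y I"
    by (rule indep_vars_cong[THEN iffD1, OF _ _ _ indep0]) (auto simp: Y_def Yc_def wv_def I_def fun_eq_iff)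
  have Ybound: "Y a \<omega> \<in> {-C..C}" for a \<omega>
  proof -
    obtain i j where a: "a = (i, j)" by force
    have "\<bar>Y a \<omega>\<bar> = \<bar>cf a\<bar> * (real n powr (-3/2) * \<bar>xihat p (\<xi> i j \<omega>)\<bar>) / (2 * pi)"
      by (simp add: Y_def wv_def a abs_mult)
    also have "\<dots> \<le> 1 * (real n powr (-3/2) * (1 / p)) / (2 * pi)"
      using cf[of a] xihat_bound[OF p, of "\<xi> i j \<omega>"]
      by (intro divide_right_mono mult_mono mult_left_mono) auto
    also have "\<dots> = C" by (simp add: C_def)
    finally show ?thesis by auto
  qed
  have EY: "expectation (Y a) = 0" if aI: "a \<in> I" for a
  proof -
    obtain i j where a: "a = (i, j)" "i < n" "j < n" using aI by (cases a) (auto simp: I_def)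
    have "Y a = (\<lambda>\<omega>. (cf a * real n powr (-3/2) / (2 * pi)) * xihat p (\<xi> i j \<omega>))"
      by (auto simp: Y_def wv_def a fun_eq_iff)
    then show ?thesis using xihat_mean[OF a(2,3)] by simp
  qed
  interpret H: Hoeffding_ineq Mg I Y "\<lambda>_. -C" "\<lambda>_. C" "\<Sum>a\<in>I. expectation (Y a)"
    by unfold_locales (use finI indep Ybound in auto)
  have mu: "(\<Sum>a\<in>I. expectation (Y a)) = 0" using EY by simp
  have npow: "real n powr (-3) = 1 / real n ^ 3"
    using n by (simp add: powr_minus divide_inverse)
  have sq: "(\<Sum>a\<in>I. (C - - C)^2) = 1 / (pi^2 * real n * p^2)"
  proof -
    have "(\<Sum>a\<in>I. (C - - C)^2) = real n^2 * (4 * C^2)" by (simp add: cardI power2_eq_square)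
    also have "C^2 = real n powr (-3) / (4 * pi^2 * p^2)"
      using n by (simp add: C_def power_divide power_mult_distrib powr_power)
    finally show ?thesis using n p by (simp add: npow field_simps power2_eq_square power3_eq_cube)
  qed
  have pos: "(\<Sum>a\<in>I. (C - - C)^2) > 0" using sq n p by simp
  have "measure Mg {\<omega> \<in> space Mg. \<delta> \<le> \<bar>\<Sum>a\<in>I. cf a * wv \<omega> a / (2 * pi)\<bar>}
      = measure Mg {\<omega> \<in> space Mg. \<bar>(\<Sum>a\<in>I. Y a \<omega>) - (\<Sum>a\<in>I. expectation (Y a))\<bar> \<ge> \<delta>}"
    by (simp add: mu Y_def)
  also have "\<dots> \<le> 2 * exp (-2 * \<delta>^2 / (\<Sum>a\<in>I. (C - - C)^2))"
    by (rule H.Hoeffding_ineq_abs_ge[OF \<delta> pos])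
  also have "-2 * \<delta>^2 / (\<Sum>a\<in>I. (C - - C)^2) = - (2 * pi^2) * (\<delta>^2 * real n * p^2)"
    unfolding sq by simp
  also have "\<dots> \<le> - (\<delta>^2 * real n * p^2)"
  proof -
    have "3 * 3 \<le> pi * pi" using pi_gt3 by (intro mult_mono) auto
    then have "1 \<le> 2 * pi^2" by (simp add: power2_eq_square)
    moreover have "0 \<le> \<delta>^2 * real n * p^2" by simp
    ultimately have "1 * (\<delta>^2 * real n * p^2) \<le> (2 * pi^2) * (\<delta>^2 * real n * p^2)"
      by (rule mult_right_mono)
    then show ?thesis by simp
  qed
  finally show ?thesis by simp
qed

lemma wv_meas1: "a \<in> I \<Longrightarrow> (\<lambda>\<omega>. wv \<omega> a) \<in> borel_measurable Mg"
proof -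
  assume "a \<in> I"
  then obtain i j where a: "a = (i, j)" "i < n" "j < n" by (cases a) (auto simp: I_def)
  have "(\<lambda>\<omega>. xihat p (\<xi> i j \<omega>)) \<in> borel_measurable Mg" using a xihat_meas by auto
  then show ?thesis unfolding a wv_def by simp
qed

lemma ReF_alt: "Re (F \<omega> x k) = (\<Sum>a\<in>I. cos (phase (xv x) k a) * wv \<omega> a / (2 * pi))"
  unfolding ReF by (simp add: sum_divide_distrib mult.commute)
lemma ImF_alt: "Im (F \<omega> x k) = (\<Sum>a\<in>I. (- sin (phase (xv x) k a)) * wv \<omega> a / (2 * pi))"
  unfolding ImF by (simp add: sum_divide_distrib mult.commute sum_negf)

lemma section_bound:
  assumes \<delta>: "\<delta> \<ge> 0"
  shows "measure Mg {\<omega> \<in> space Mg. badp \<delta> K \<omega> x} \<le> 4 * real (card (Box K)) * exp (- (\<delta>^2 * real n * p^2))"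
proof -
  define RE where "RE k = {\<omega> \<in> space Mg. \<delta> \<le> \<bar>Re (F \<omega> x k)\<bar>}" for k
  define IM where "IM k = {\<omega> \<in> space Mg. \<delta> \<le> \<bar>Im (F \<omega> x k)\<bar>}" for k
  define E where "E = exp (- (\<delta>^2 * real n * p^2))"
  have RE_sets: "RE k \<in> sets Mg" for k
  proof -
    have "(\<lambda>\<omega>. \<bar>Re (F \<omega> x k)\<bar>) \<in> borel_measurable Mg"
      unfolding ReF_alt using wv_meas1
      by (intro borel_measurable_abs borel_measurable_sum borel_measurable_divide borel_measurable_times) auto
    then show ?thesis unfolding RE_def by measurable
  qed
  have IM_sets: "IM k \<in> sets Mg" for k
  proof -
    have "(\<lambda>\<omega>. \<bar>Im (F \<omega> x k)\<bar>) \<in> borel_measurable Mg"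
      unfolding ImF_alt using wv_meas1
      by (intro borel_measurable_abs borel_measurable_sum borel_measurable_divide borel_measurable_times) auto
    then show ?thesis unfolding IM_def by measurable
  qed
  have REb: "measure Mg (RE k) \<le> 2 * E" for k
    unfolding RE_def ReF_alt E_def by (rule hoeffding_step[OF _ \<delta>]) simp
  have IMb: "measure Mg (IM k) \<le> 2 * E" for k
    unfolding IM_def ImF_alt E_def by (rule hoeffding_step[OF _ \<delta>]) simp
  have "{\<omega> \<in> space Mg. badp \<delta> K \<omega> x} = (\<Union>k\<in>Box K. RE k \<union> IM k)"
    by (auto simp: badp_def RE_def IM_def)
  also have "measure Mg \<dots> \<le> (\<Sum>k\<in>Box K. measure Mg (RE k \<union> IM k))"
    using RE_sets IM_sets finBox by (intro measure_UNION_le) auto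
  also have "\<dots> \<le> (\<Sum>k\<in>Box K. 4 * E)"
  proof (intro sum_mono)
    fix k
    have "measure Mg (RE k \<union> IM k) \<le> measure Mg (RE k) + measure Mg (IM k)"
      using RE_sets IM_sets by (intro measure_Un_le) auto
    also have "\<dots> \<le> 4 * E" using REb[of k] IMb[of k] by simp
    finally show "measure Mg (RE k \<union> IM k) \<le> 4 * E" .
  qed
  also have "\<dots> = 4 * real (card (Box K)) * E" by simp
  finally show ?thesis by (simp add: E_def)
qed

lemma BAD_sub: "BAD \<delta> K \<subseteq> space Mg \<times> space M0"
  by (auto simp: BAD_def space_pair_measure)

lemma section_eq: "\<omega> \<in> space Mg \<Longrightarrow> Pair \<omega> -` BAD \<delta> K = {x \<in> space M0. badp \<delta> K \<omega> x}"
  by (auto simp: BAD_def space_pair_measure)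

lemma section2_eq: "x \<in> space M0 \<Longrightarrow> (\<lambda>\<omega>. (\<omega>, x)) -` BAD \<delta> K = {\<omega> \<in> space Mg. badp \<delta> K \<omega> x}"
  by (auto simp: BAD_def space_pair_measure)

lemma markov_step:
  assumes \<delta>: "\<delta> \<ge> 0" and \<eta>: "\<eta> > 0"
  shows "measure Mg {\<omega> \<in> space Mg. ennreal \<eta> \<le> emeasure M0 (Pair \<omega> -` BAD \<delta> K)}
           \<le> 4 * real (card (Box K)) * exp (- (\<delta>^2 * real n * p^2)) / \<eta>"
proof -
  interpret G: prob_space Mg by (rule Mg)
  interpret Z: prob_space M0 by (rule M0)
  interpret PP: pair_prob_space Mg M0 by unfold_locales
  define \<rho> where "\<rho> = 4 * real (card (Box K)) * exp (- (\<delta>^2 * real n * p^2))"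
  have \<rho>0: "\<rho> \<ge> 0" by (simp add: \<rho>_def)
  define u where "u \<omega> = emeasure M0 (Pair \<omega> -` BAD \<delta> K)" for \<omega>
  have um: "u \<in> borel_measurable Mg"
    unfolding u_def by (rule Z.measurable_emeasure_Pair[OF BAD_sets])
  define A where "A = {\<omega> \<in> space Mg. ennreal \<eta> \<le> u \<omega>}"
  have A: "A \<in> sets Mg" unfolding A_def using um by measurable
  have "ennreal \<eta> * emeasure Mg A = (\<integral>\<^sup>+\<omega>. ennreal \<eta> * indicator A \<omega> \<partial>Mg)"
    using A by (simp add: nn_integral_cmult_indicator)
  also have "\<dots> \<le> (\<integral>\<^sup>+\<omega>. u \<omega> \<partial>Mg)"
    by (intro nn_integral_mono) (auto simp: A_def indicator_def)
  also have "\<dots> = emeasure (Mg \<Otimes>\<^sub>M M0) (BAD \<delta> K)"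
    unfolding u_def by (rule Z.emeasure_pair_measure_alt[OF BAD_sets, symmetric])
  also have "\<dots> = (\<integral>\<^sup>+x. emeasure Mg ((\<lambda>\<omega>. (\<omega>, x)) -` BAD \<delta> K) \<partial>M0)"
    by (rule PP.emeasure_pair_measure_alt2[OF BAD_sets])
  also have "\<dots> \<le> (\<integral>\<^sup>+x. ennreal \<rho> \<partial>M0)"
  proof (intro nn_integral_mono)
    fix x assume x: "x \<in> space M0"
    have "emeasure Mg ((\<lambda>\<omega>. (\<omega>, x)) -` BAD \<delta> K) = emeasure Mg {\<omega> \<in> space Mg. badp \<delta> K \<omega> x}"
      by (simp add: section2_eq[OF x])
    also have "\<dots> = ennreal (measure Mg {\<omega> \<in> space Mg. badp \<delta> K \<omega> x})"
      by (simp add: G.emeasure_eq_measure)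
    also have "\<dots> \<le> ennreal \<rho>"
      unfolding \<rho>_def by (intro ennreal_leI section_bound[OF \<delta>])
    finally show "emeasure Mg ((\<lambda>\<omega>. (\<omega>, x)) -` BAD \<delta> K) \<le> ennreal \<rho>" .
  qed
  also have "\<dots> = ennreal \<rho>" by (simp add: Z.emeasure_space_1)
  finally have "ennreal \<eta> * emeasure Mg A \<le> ennreal \<rho>" .
  then have "ennreal (\<eta> * measure Mg A) \<le> ennreal \<rho>"
    using \<eta> by (simp add: G.emeasure_eq_measure ennreal_mult)
  then have "\<eta> * measure Mg A \<le> \<rho>" using \<rho>0 by (simp add: ennreal_le_iff)
  then have "measure Mg A \<le> \<rho> / \<eta>" using \<eta> by (simp add: field_simps)
  then show ?thesis by (simp add: A_def u_def \<rho>_def)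
qed

lemma Fb: "cmod (F \<omega> x k) \<le> sqrt (real n) / p"
proof -
  have "cmod (F \<omega> x k) \<le> real (card I) * (real n powr (-3/2) / p) / (2 * pi)"
    unfolding F_def
  proof (rule fourier_norm_bound)
    fix a assume "a \<in> I"
    obtain i j where a: "a = (i, j)" by force
    have "\<bar>wv \<omega> a\<bar> = real n powr (-3/2) * \<bar>xihat p (\<xi> i j \<omega>)\<bar>" by (simp add: wv_def a abs_mult)
    also have "\<dots> \<le> real n powr (-3/2) * (1 / p)"
      using xihat_bound[OF p] by (intro mult_left_mono) auto
    finally show "\<bar>wv \<omega> a\<bar> \<le> real n powr (-3/2) / p" by simp
  qed
  also have "real (card I) * (real n powr (-3/2) / p) = sqrt (real n) / p"
  proof -
    have "real (card I) * real n powr (-3/2) = real n ^ 2 * real n powr (-3/2)"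
      by (simp add: cardI)
    also have "real n ^ 2 = real n powr 2" by simp
    also have "real n powr 2 * real n powr (-3/2) = real n powr (1/2)"
      by (simp only: powr_add[symmetric]) simp
    also have "\<dots> = sqrt (real n)" using n by (simp add: powr_half_sqrt)
    finally show ?thesis by simp
  qed
  also have "sqrt (real n) / p / (2 * pi) \<le> sqrt (real n) / p / 1"
    using p pi_gt3 by (intro divide_left_mono) auto
  finally show ?thesis by simp
qed

lemma Hneg_nonneg: "Hneg_norm_sq r A w x \<ge> 0"
  unfolding Hneg_norm_sq_def by (intro infsum_nonneg) simp

lemma integral_bound:
  assumes r: "r > 1" and K: "K > 0" and \<delta>: "\<delta> \<ge> 0" and \<eta>: "\<eta> \<ge> 0"
    and \<omega>: "\<omega> \<in> space Mg"
    and small: "emeasure M0 (Pair \<omega> -` BAD \<delta> K) \<le> ennreal \<eta>"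
  shows "integral\<^sup>L M0 (\<lambda>x. Hneg_norm_sq r I (wv \<omega>) (xv x))
           \<le> 2 * \<delta>^2 * infsum (wt r) UNIV + (real n / p^2) * infsum (wt r) UNIV * \<eta>
              + K powr (1 - r) * (real n / p^2) * infsum (wt ((r+1)/2)) UNIV"
proof -
  interpret Z: prob_space M0 by (rule M0)
  define S where "S = Pair \<omega> -` BAD \<delta> K"
  have S: "S \<in> sets M0" unfolding S_def by (rule sets_Pair1[OF BAD_sets])
  have mS: "measure M0 S \<le> \<eta>"
    using small \<eta> by (simp add: S_def[symmetric] Z.emeasure_eq_measure)
  define Wr where "Wr = infsum (wt r) UNIV"
  define Ws where "Ws = infsum (wt ((r+1)/2)) UNIV"
  have Wr0: "Wr \<ge> 0" unfolding Wr_def by (intro infsum_nonneg wt_nonneg)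
  have Ws0: "Ws \<ge> 0" unfolding Ws_def by (intro infsum_nonneg wt_nonneg)
  define Mb where "Mb = sqrt (real n) / p"
  have Mb0: "Mb \<ge> 0" using p by (simp add: Mb_def)
  have Mb2: "Mb^2 = real n / p^2" by (simp add: Mb_def power_divide)
  define T where "T = K powr (1 - r) * Mb^2 * Ws"
  have T0: "T \<ge> 0" using Ws0 by (simp add: T_def)
  define G where "G x = 2 * \<delta>^2 * Wr + Mb^2 * Wr * indicator S x + T" for x
  have pt: "Hneg_norm_sq r I (wv \<omega>) (xv x) \<le> G x" if x: "x \<in> space M0" for x
  proof -
    have bad_iff: "(\<exists>k. real_of_int \<bar>fst k\<bar> \<le> K \<and> real_of_int \<bar>snd k\<bar> \<le> K \<and>
              (\<delta> \<le> \<bar>Re (fourier_atoms I (wv \<omega>) (xv x) k)\<bar> \<or> \<delta> \<le> \<bar>Im (fourier_atoms I (wv \<omega>) (xv x) k)\<bar>))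
          \<longleftrightarrow> x \<in> S"
      using x \<omega> by (auto simp: S_def section_eq badp_def Box_def F_def)
    have Fb': "\<And>k. cmod (fourier_atoms I (wv \<omega>) (xv x) k) \<le> Mb"
      using Fb unfolding F_def Mb_def by blast
    have "Hneg_norm_sq r I (wv \<omega>) (xv x) \<le> (2 * \<delta>^2 + (if x \<in> S then Mb^2 else 0)) * Wr + T"
      using H_bound[OF r K \<delta> Mb0 Fb'] unfolding bad_iff Wr_def Ws_def T_def by simp
    also have "\<dots> = G x" by (simp add: G_def indicator_def algebra_simps)
    finally show ?thesis .
  qed
  have Gi: "integrable M0 G"
    unfolding G_def using S
    by (intro Bochner_Integration.integrable_add Bochner_Integration.integrable_mult_right integrable_real_indicator Z.integrable_const)
       (auto simp: less_top[symmetric])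
  have IG: "integral\<^sup>L M0 G = 2 * \<delta>^2 * Wr + Mb^2 * Wr * measure M0 S + T"
    unfolding G_def using S by (simp add: Z.prob_space less_top[symmetric] integrable_mult_right)
  have RHS: "integral\<^sup>L M0 G \<le> 2 * \<delta>^2 * Wr + (real n / p^2) * Wr * \<eta> + T"
  proof -
    have "(real n / p^2) * Wr * measure M0 S \<le> (real n / p^2) * Wr * \<eta>"
      using mS Wr0 p by (intro mult_left_mono) auto
    then show ?thesis unfolding IG Mb2 by simp
  qed
  have "integral\<^sup>L M0 (\<lambda>x. Hneg_norm_sq r I (wv \<omega>) (xv x)) \<le> integral\<^sup>L M0 G"
  proof (cases "integrable M0 (\<lambda>x. Hneg_norm_sq r I (wv \<omega>) (xv x))")
    case True
    then show ?thesis using Gi pt by (intro integral_mono) auto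
  next
    case False
    then have "integral\<^sup>L M0 (\<lambda>x. Hneg_norm_sq r I (wv \<omega>) (xv x)) = 0" by (rule not_integrable_integral_eq)
    moreover have "0 \<le> integral\<^sup>L M0 G"
      using Wr0 T0 by (intro integral_nonneg_AE) (auto simp: G_def)
    ultimately show ?thesis by simp
  qed
  also note RHS
  finally show ?thesis by (simp add: Wr_def Ws_def T_def Mb2)
qed

definition "Aset \<delta> K \<eta> = {\<omega> \<in> space Mg. ennreal \<eta> \<le> emeasure M0 (Pair \<omega> -` BAD \<delta> K)}"

lemma Aset_sets: "Aset \<delta> K \<eta> \<in> sets Mg"
proof -
  interpret Z: prob_space M0 by (rule M0)
  have "(\<lambda>\<omega>. emeasure M0 (Pair \<omega> -` BAD \<delta> K)) \<in> borel_measurable Mg"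
    by (rule Z.measurable_emeasure_Pair[OF BAD_sets])
  then show ?thesis unfolding Aset_def by measurable
qed

lemma card_Box: "K \<ge> 0 \<Longrightarrow> real (card (Box K)) \<le> (2 * K + 3)^2"
proof -
  assume K: "K \<ge> 0"
  have "card (Box K) \<le> card ({-\<lceil>K\<rceil>..\<lceil>K\<rceil>} \<times> {-\<lceil>K\<rceil>..\<lceil>K\<rceil>})"
    by (rule card_mono[OF _ Box_sub]) simp
  also have "\<dots> = nat (2 * \<lceil>K\<rceil> + 1) * nat (2 * \<lceil>K\<rceil> + 1)" by (simp add: card_cartesian_product)
  finally have c: "real (card (Box K)) \<le> real (nat (2 * \<lceil>K\<rceil> + 1)) * real (nat (2 * \<lceil>K\<rceil> + 1))"
    by (metis of_nat_le_iff of_nat_mult)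
  have t: "real (nat (2 * \<lceil>K\<rceil> + 1)) = 2 * real_of_int \<lceil>K\<rceil> + 1" using K by simp
  have t2: "2 * real_of_int \<lceil>K\<rceil> + 1 \<le> 2 * K + 3" using ceiling_correct[of K] by linarith
  have t3: "0 \<le> 2 * real_of_int \<lceil>K\<rceil> + 1" using K by simp
  have "(2 * real_of_int \<lceil>K\<rceil> + 1) * (2 * real_of_int \<lceil>K\<rceil> + 1) \<le> (2 * K + 3) * (2 * K + 3)"
    using t2 t3 by (intro mult_mono) auto
  with c t show ?thesis by (simp add: power2_eq_square)
qed

lemma Aset_measure:
  assumes "\<delta> \<ge> 0" "\<eta> > 0" "K \<ge> 0"
  shows "measure Mg (Aset \<delta> K \<eta>) \<le> 4 * (2 * K + 3)^2 * exp (- (\<delta>^2 * real n * p^2)) / \<eta>"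
proof -
  have "measure Mg (Aset \<delta> K \<eta>) \<le> 4 * real (card (Box K)) * exp (- (\<delta>^2 * real n * p^2)) / \<eta>"
    unfolding Aset_def by (rule markov_step[OF assms(1,2)])
  also have "\<dots> \<le> 4 * (2 * K + 3)^2 * exp (- (\<delta>^2 * real n * p^2)) / \<eta>"
    using card_Box[OF assms(3)] assms(2) by (intro divide_right_mono mult_right_mono) auto
  finally show ?thesis .
qed

lemma eta_eq: "eta_norm_sq r n p (\<lambda>i j. \<xi> i j \<omega>) (\<lambda>i. \<theta> i x) = Hneg_norm_sq r I (wv \<omega>) (xv x)"
  by (simp add: eta_norm_sq_def I_def wv_def xv_def)

lemma final_bound:
  assumes r: "r > 1" and K: "K > 0" and \<delta>: "\<delta> \<ge> 0" and \<eta>: "\<eta> \<ge> 0"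
    and \<omega>: "\<omega> \<in> space Mg" "\<omega> \<notin> Aset \<delta> K \<eta>"
  shows "integral\<^sup>L M0 (\<lambda>x. eta_norm_sq r n p (\<lambda>i j. \<xi> i j \<omega>) (\<lambda>i. \<theta> i x))
           \<le> 2 * \<delta>^2 * infsum (wt r) UNIV + (real n / p^2) * infsum (wt r) UNIV * \<eta>
              + K powr (1 - r) * (real n / p^2) * infsum (wt ((r+1)/2)) UNIV"
    and "integral\<^sup>L M0 (\<lambda>x. eta_norm_sq r n p (\<lambda>i j. \<xi> i j \<omega>) (\<lambda>i. \<theta> i x)) \<ge> 0"
proof -
  have "emeasure M0 (Pair \<omega> -` BAD \<delta> K) \<le> ennreal \<eta>"
    using \<omega> by (auto simp: Aset_def not_le intro: less_imp_le)
  then show "integral\<^sup>L M0 (\<lambda>x. eta_norm_sq r n p (\<lambda>i j. \<xi> i j \<omega>) (\<lambda>i. \<theta> i x))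
           \<le> 2 * \<delta>^2 * infsum (wt r) UNIV + (real n / p^2) * infsum (wt r) UNIV * \<eta>
              + K powr (1 - r) * (real n / p^2) * infsum (wt ((r+1)/2)) UNIV"
    unfolding eta_eq by (rule integral_bound[OF r K \<delta> \<eta> \<omega>(1)])
  show "integral\<^sup>L M0 (\<lambda>x. eta_norm_sq r n p (\<lambda>i j. \<xi> i j \<omega>) (\<lambda>i. \<theta> i x)) \<ge> 0"
    by (intro integral_nonneg_AE) (simp add: eta_eq Hneg_nonneg)
qed

end

lemma powr_sq: "(x::real) > 0 \<Longrightarrow> (x powr a)^2 = x powr (2 * a)"
  by (simp add: powr_power)

lemma L1:
  assumes x: "(x::real) \<ge> 1" and P: "P \<ge> x powr (-2/3)"
  shows "x powr (1/6) \<le> (x powr (-1/12))^2 * x * P"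
proof -
  have x0: "x > 0" using x by simp
  have "x powr (1/6) = x powr (-1/6 + 1 + -2/3)" by simp
  also have "\<dots> = x powr (-1/6) * x powr 1 * x powr (-2/3)" by (simp only: powr_add)
  also have "\<dots> = (x powr (-1/6) * x) * x powr (-2/3)" using x0 by simp
  also have "\<dots> \<le> (x powr (-1/6) * x) * P"
    using P x0 by (intro mult_left_mono) auto
  also have "x powr (-1/6) = (x powr (-1/12))^2" using x0 by (simp add: powr_sq)
  finally show ?thesis .
qed

lemma L2:
  assumes x: "(x::real) \<ge> 1" and P: "P \<ge> x powr (-2/3)"
  shows "1 / P \<le> x powr (2/3)"
proof -
  have x0: "x > 0" using x by simp
  have "x powr (-2/3) > 0" using x0 by simp
  then have P0: "P > 0" using P by linarith
  have "1 / P \<le> 1 / x powr (-2/3)" using P x0 P0 by (intro divide_left_mono) auto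
  also have "\<dots> = x powr (2/3)"
  proof -
    have e: "(-2/3::real) = - (2/3)" by simp
    show ?thesis unfolding e powr_minus_divide by simp
  qed
  finally show ?thesis .
qed

lemma L3:
  assumes x: "(x::real) \<ge> 1" and P: "P \<ge> x powr (-2/3)"
  shows "x powr (-3) * (x / P) \<le> x powr (-4/3)"
proof -
  have x0: "x > 0" using x by simp
  have "x / P = x * (1 / P)" by simp
  also have "\<dots> \<le> x * x powr (2/3)" using L2[OF x P] x0 by (intro mult_left_mono) auto
  finally have "x powr (-3) * (x / P) \<le> x powr (-3) * (x * x powr (2/3))"
    by (intro mult_left_mono) auto
  also have "x powr (-3) * (x * x powr (2/3)) = x powr (-3) * x powr 1 * x powr (2/3)"
  proof -
    have "x powr 1 = x" using x0 by simp
    then show ?thesis by (simp only: mult.assoc)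
  qed
  also have "\<dots> = x powr (-3 + 1 + 2/3)" by (simp only: powr_add)
  also have "\<dots> = x powr (-4/3)" by simp
  finally show ?thesis .
qed

lemma Kpow: "(x::real) > 0 \<Longrightarrow> r > 1 \<Longrightarrow> (x powr (3 / (r - 1))) powr (1 - r) = x powr (-3)"
proof -
  assume "r > 1"
  then have e: "3 / (r - 1) * (1 - r) = -3" by (simp add: field_simps)
  show ?thesis by (simp only: powr_powr e)
qed

lemma p_lower:
  assumes n: "real n \<ge> 1" and p: "P > 0" and e: "0 < \<epsilon>" "\<epsilon> < 1"
    and g: "1 \<le> P^3 * real n powr (1 - \<epsilon>)"
  shows "P^2 \<ge> real n powr (-2/3)"
proof -
  have n0: "real n > 0" using n by simp
  have "real n powr (1 - \<epsilon>) \<le> real n powr 1" using n e by (intro powr_mono) auto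
  then have "real n powr (1 - \<epsilon>) \<le> real n" using n0 by simp
  then have "P^3 * real n powr (1 - \<epsilon>) \<le> P^3 * real n" using p by (intro mult_left_mono) auto
  then have "1 \<le> P^3 * real n" using g by linarith
  define q where "q = real n powr (-1/3)"
  have q0: "q > 0" using n0 by (simp add: q_def)
  have q3: "q^3 * real n = 1"
  proof -
    have "q^3 = real n powr (-1)" using n0 by (simp add: q_def powr_power)
    then show ?thesis using n0 by (simp add: powr_minus)
  qed
  have "q \<le> P"
  proof (rule ccontr)
    assume "\<not> q \<le> P"
    then have "P^3 < q^3" using p by (intro power_strict_mono) auto
    then have "P^3 * real n < q^3 * real n" using n0 by simp
    with q3 \<open>1 \<le> P^3 * real n\<close> show False by simp
  qed
  then have "q^2 \<le> P^2" using q0 by (intro power_mono) auto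
  moreover have "q^2 = real n powr (-2/3)" using n0 by (simp add: q_def powr_sq)
  ultimately show ?thesis by simp
qed

theorem mainTheorem5:
  fixes M0 :: "'a measure" and Mg :: "'b measure"
    and p :: "nat \<Rightarrow> real"
    and \<xi> :: "nat \<Rightarrow> nat \<Rightarrow> nat \<Rightarrow> 'b \<Rightarrow> bool"
    and \<theta> :: "nat \<Rightarrow> nat \<Rightarrow> 'a \<Rightarrow> real"
    and r \<epsilon> :: real
  assumes M0: "prob_space M0"
    and Mg: "prob_space Mg"
    and p_range: "\<forall>n\<ge>2. 0 < p n \<and> p n \<le> 1"
    and xi_meas: "\<forall>n\<ge>2. \<forall>i<n. \<forall>j<n. \<xi> n i j \<in> measurable Mg (count_space UNIV)"
    and xi_bern: "\<forall>n\<ge>2. \<forall>i<n. \<forall>j<n. measure Mg {\<omega> \<in> space Mg. \<xi> n i j \<omega>} = p n"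
    and xi_indep: "\<forall>n\<ge>2. prob_space.indep_vars Mg (\<lambda>_. count_space UNIV)
                       (\<lambda>(i, j). \<xi> n i j) ({..<n} \<times> {..<n})"
    and theta_meas: "\<forall>n i. \<theta> n i \<in> borel_measurable M0"
    and eps: "0 < \<epsilon>" "\<epsilon> < 1"
    and growth: "liminf (\<lambda>n. ereal (p n ^ 3 * real n powr (1 - \<epsilon>))) = \<infinity>"
    and r: "r > 1"
  shows "AE \<omega> in Mg.
           (\<lambda>n. \<integral>x. eta_norm_sq r n (p n) (\<lambda>i j. \<xi> n i j \<omega>) (\<lambda>i. \<theta> n i x) \<partial>M0)
             \<longlonglongrightarrow> 0"
proof -
  interpret G: prob_space Mg by (rule Mg)
  have lim: "(\<lambda>n. ereal (p n ^ 3 * real n powr (1 - \<epsilon>))) \<longlonglongrightarrow> \<infinity>"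
    using growth by (simp add: liminf_PInfty)
  then obtain N1 where N1: "\<And>n. n \<ge> N1 \<Longrightarrow> ereal 1 \<le> ereal (p n ^ 3 * real n powr (1 - \<epsilon>))"
    unfolding Lim_PInfty by blast
  define N0 where "N0 = max N1 2"
  have Nn: "n \<ge> 2 \<and> 0 < p n \<and> p n \<le> 1 \<and> p n ^ 2 \<ge> real n powr (-2/3)" if n: "n \<ge> N0" for n
  proof -
    have n2: "n \<ge> 2" using n by (simp add: N0_def)
    have pp: "0 < p n" "p n \<le> 1" using p_range n2 by auto
    have g: "1 \<le> p n ^ 3 * real n powr (1 - \<epsilon>)" using N1[of n] n by (simp add: N0_def)
    have "real n \<ge> 1" using n2 by simp
    from p_lower[OF this pp(1) eps g] n2 pp show ?thesis by simp
  qed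
  have hset: "setting M0 Mg n (p n) (\<xi> n) (\<theta> n)" if n2: "n \<ge> 2" for n
  proof (rule setting.intro)
    show "prob_space M0" by (rule M0)
    show "prob_space Mg" by (rule Mg)
    show "n \<ge> 2" by (rule n2)
    show "0 < p n" "p n \<le> 1" using p_range n2 by auto
    show "\<forall>i<n. \<forall>j<n. \<xi> n i j \<in> Mg \<rightarrow>\<^sub>M count_space UNIV" using xi_meas n2 by blast
    show "\<forall>i<n. \<forall>j<n. measure Mg {\<omega> \<in> space Mg. \<xi> n i j \<omega>} = p n" using xi_bern n2 by blast
    show "prob_space.indep_vars Mg (\<lambda>_. count_space UNIV) (\<lambda>(i, j). \<xi> n i j) ({..<n} \<times> {..<n})"
      using xi_indep n2 by blast
    show "\<forall>i. \<theta> n i \<in> borel_measurable M0" using theta_meas by blast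
  qed
  define \<delta> where "\<delta> n = real n powr (-1/12)" for n :: nat
  define K where "K n = real n powr (3 / (r - 1))" for n :: nat
  define \<eta> where "\<eta> n = p n ^ 2 / real n ^ 2" for n
  define A where "A n = (if N0 \<le> n then setting.Aset M0 Mg n (p n) (\<xi> n) (\<theta> n) (\<delta> n) (K n) (\<eta> n) else {})" for n
  have Asets: "A n \<in> sets Mg" for n
    using setting.Aset_sets[OF hset] Nn by (auto simp: A_def)
  define b where "b n = 4 * (2 * real n powr (3 / (r - 1)) + 3)^2 * exp (- (real n powr (1/6))) * (real n ^ 2 * real n powr (2/3))" for n :: nat
  have Ab: "measure Mg (A n) \<le> b n" if n: "n \<ge> N0" for n
  proof -
    from Nn[OF n] have n2: "n \<ge> 2" and pp: "0 < p n" "p n \<le> 1" and pl: "p n ^ 2 \<ge> real n powr (-2/3)" by auto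
    have x1: "real n \<ge> 1" using n2 by simp
    have d0: "\<delta> n \<ge> 0" by (simp add: \<delta>_def)
    have e0: "\<eta> n > 0" using pp n2 by (simp add: \<eta>_def)
    have K0: "K n \<ge> 0" by (simp add: K_def)
    have "measure Mg (A n) \<le> 4 * (2 * K n + 3)^2 * exp (- (\<delta> n^2 * real n * p n^2)) / \<eta> n"
      using setting.Aset_measure[OF hset[OF n2] d0 e0 K0] n by (simp add: A_def)
    also have "\<dots> = 4 * (2 * K n + 3)^2 * exp (- (\<delta> n^2 * real n * p n^2)) * (real n ^ 2 * (1 / p n ^ 2))"
      by (simp add: \<eta>_def)
    also have "\<dots> \<le> 4 * (2 * K n + 3)^2 * exp (- (real n powr (1/6))) * (real n ^ 2 * real n powr (2/3))"
    proof (intro mult_mono mult_left_mono)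
      show "exp (- (\<delta> n^2 * real n * p n^2)) \<le> exp (- (real n powr (1/6)))"
        using L1[OF x1 pl] by (simp add: \<delta>_def)
      show "1 / p n ^ 2 \<le> real n powr (2/3)" by (rule L2[OF x1 pl])
    qed auto
    also have "\<dots> = b n" by (simp add: b_def K_def)
    finally show ?thesis .
  qed
  have summ: "summable (\<lambda>n. measure Mg (A n))"
  proof (rule summable_comparison_test_ev)
    have lim0: "(\<lambda>n. real n powr 2 * b n) \<longlonglongrightarrow> 0"
      unfolding b_def using r by real_asymp
    then have ev: "eventually (\<lambda>n. real n powr 2 * b n < 1) sequentially"
      by (rule order_tendstoD) simp
    show "eventually (\<lambda>n. norm (measure Mg (A n)) \<le> real n powr (-2)) sequentially"
      using ev eventually_ge_at_top[of N0] eventually_ge_at_top[of "1::nat"]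
    proof eventually_elim
      case (elim n)
      have np: "real n powr 2 > 0" using elim by simp
      have "b n < 1 / real n powr 2" using elim(1) np by (simp add: field_simps)
      also have "1 / real n powr 2 = real n powr (-2)" by (simp add: powr_minus_divide)
      finally have "b n \<le> real n powr (-2)" by simp
      then show ?case using Ab[OF elim(2)] by simp
    qed
    show "summable (\<lambda>n. real n powr (-2))" by (subst summable_real_powr_iff) simp
  qed
  have BC: "AE \<omega> in Mg. eventually (\<lambda>n. \<omega> \<in> space Mg - A n) sequentially"
    by (rule borel_cantelli_AE1[OF Asets]) (auto simp: summ less_top[symmetric])
  define Wr where "Wr = infsum (wt r) UNIV"
  define Ws where "Ws = infsum (wt ((r+1)/2)) UNIV"
  have Wr0: "Wr \<ge> 0" unfolding Wr_def by (intro infsum_nonneg wt_nonneg)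
  have Ws0: "Ws \<ge> 0" unfolding Ws_def by (intro infsum_nonneg wt_nonneg)
  define c where "c n = 2 * real n powr (-1/6) * Wr + Wr / real n + real n powr (-4/3) * Ws" for n :: nat
  have c0: "c \<longlonglongrightarrow> 0" unfolding c_def by real_asymp
  have main: "(\<lambda>n. \<integral>x. eta_norm_sq r n (p n) (\<lambda>i j. \<xi> n i j \<omega>) (\<lambda>i. \<theta> n i x) \<partial>M0) \<longlonglongrightarrow> 0"
    if \<omega>: "\<omega> \<in> space Mg" and ev: "eventually (\<lambda>n. \<omega> \<in> space Mg - A n) sequentially" for \<omega>
  proof (rule tendsto_sandwich[OF _ _ tendsto_const c0])
    show "eventually (\<lambda>n. 0 \<le> (\<integral>x. eta_norm_sq r n (p n) (\<lambda>i j. \<xi> n i j \<omega>) (\<lambda>i. \<theta> n i x) \<partial>M0)) sequentially"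
      using eventually_ge_at_top[of "2::nat"]
    proof eventually_elim
      case (elim n)
      show ?case by (intro integral_nonneg_AE) (simp add: setting.eta_eq[OF hset[OF elim]] setting.Hneg_nonneg[OF hset[OF elim]])
    qed
    show "eventually (\<lambda>n. (\<integral>x. eta_norm_sq r n (p n) (\<lambda>i j. \<xi> n i j \<omega>) (\<lambda>i. \<theta> n i x) \<partial>M0) \<le> c n) sequentially"
      using ev eventually_ge_at_top[of N0]
    proof eventually_elim
      case (elim n)
      from Nn[OF elim(2)] have n2: "n \<ge> 2" and pp: "0 < p n" "p n \<le> 1" and pl: "p n ^ 2 \<ge> real n powr (-2/3)" by auto
      have x1: "real n \<ge> 1" using n2 by simp
      have x0: "real n > 0" using n2 by simp
      have d0: "\<delta> n \<ge> 0" by (simp add: \<delta>_def)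
      have e0: "\<eta> n \<ge> 0" by (simp add: \<eta>_def)
      have K0: "K n > 0" using x0 by (simp add: K_def)
      have nA: "\<omega> \<notin> setting.Aset M0 Mg n (p n) (\<xi> n) (\<theta> n) (\<delta> n) (K n) (\<eta> n)"
        using elim by (simp add: A_def)
      have "(\<integral>x. eta_norm_sq r n (p n) (\<lambda>i j. \<xi> n i j \<omega>) (\<lambda>i. \<theta> n i x) \<partial>M0)
           \<le> 2 * \<delta> n^2 * Wr + (real n / p n^2) * Wr * \<eta> n + K n powr (1 - r) * (real n / p n^2) * Ws"
        unfolding Wr_def Ws_def by (rule setting.final_bound(1)[OF hset[OF n2] r K0 d0 e0 \<omega> nA])
      also have "\<delta> n^2 = real n powr (-1/6)" using x0 by (simp add: \<delta>_def powr_sq)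
      also have "(real n / p n^2) * Wr * \<eta> n = Wr / real n" using x0 pp by (simp add: \<eta>_def field_simps power2_eq_square)
      also have "K n powr (1 - r) = real n powr (-3)" using x0 r by (simp add: K_def Kpow)
      also have "real n powr (-3) * (real n / p n^2) * Ws \<le> real n powr (-4/3) * Ws"
        using L3[OF x1 pl] Ws0 by (intro mult_right_mono) auto
      finally show ?case by (simp add: c_def)
    qed
  qed
  show ?thesis
    by (rule AE_mp[OF BC AE_I2]) (use main in blast)
qed

end
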